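(* Let $(G,* )$ be a metrizable topological group. The following are equivalent: (1) $G$ has the property ${\sf Smirnov}$-${\sf S}_c(\mathcal{O}_{\sf nbd},\mathcal{O})$; (2) $G$ has the finitary Haver property with respect to every left-invariant metric on $G$ compatible with the topology of $G$.
   Context: For a topological group $(G,* )$ with identity $e$ and a neighborhood $U$ of $e$, let $\mathcal{O}(U)=\{x*U: x\in G\}$ and $\mathcal{O}_{\sf nbd}=\{\mathcal{O}(U): U \text{ a neighborhood of } e\}$. $\mathcal{O}$ denotes the collection of all open covers of $G$. A family $\mathcal{B}$ refines $\mathcal{A}$ if every member of $\mathcal{B}$ is contained in some member of $\mathcal{A}$. ${\sf Smirnov}$-${\sf S}_c(\mathcal{A},\mathcal{B})$ is the statement: for each sequence $(A_n:n<\infty)$ of elements of $\mathcal{A}$ there exist a positive integer $k$ and a sequence $(B_n:n\le k)$ where each $B_n$ is a pairwise disjoint family of open sets refining $A_n$, such that $\bigcup_{n\le k}B_n\in\mathcal{B}$. A metrizable space $X$ is finitary Haver with respect to a metric $d$ if for each sequence $(\epsilon_n:n<\infty)$ of positive reals there exist a positive integer $k$ and a sequence $(\mathcal{V}_n:n\le k)$ where each $\mathcal{V}_n$ is a pairwise disjoint family of open sets each of $d$-diameter less than $\epsilon_n$, such that $\bigcup_{n\le k}\mathcal{V}_n$ covers $X$. A metric $d$ on $G$ is left-invariant if $d(g*x,g*y)=d(x,y)$ for all $g,x,y$. *)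

theory Defs
  imports "HOL-Analysis.Analysis" "HOL-Algebra.Coset"
begin

definition topological_group :: "('a, 'b) monoid_scheme \<Rightarrow> 'a topology \<Rightarrow> bool" where
  "topological_group G T \<longleftrightarrow> group G \<and> topspace T = carrier G \<and>
     continuous_map (prod_topology T T) T (\<lambda>(x, y). x \<otimes>\<^bsub>G\<^esub> y) \<and>
     continuous_map T T (\<lambda>x. inv\<^bsub>G\<^esub> x)"

definition nbhd_of :: "'a topology \<Rightarrow> 'a \<Rightarrow> 'a set \<Rightarrow> bool" where
  "nbhd_of T p U \<longleftrightarrow> U \<subseteq> topspace T \<and> (\<exists>V. openin T V \<and> p \<in> V \<and> V \<subseteq> U)"

definition O_of :: "('a, 'b) monoid_scheme \<Rightarrow> 'a set \<Rightarrow> 'a set set" where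
  "O_of G U = {x <#\<^bsub>G\<^esub> U | x. x \<in> carrier G}"

definition O_nbd :: "('a, 'b) monoid_scheme \<Rightarrow> 'a topology \<Rightarrow> 'a set set set" where
  "O_nbd G T = {O_of G U | U. nbhd_of T \<one>\<^bsub>G\<^esub> U}"

definition open_covers :: "'a topology \<Rightarrow> 'a set set set" where
  "open_covers T = {\<U>. (\<forall>U\<in>\<U>. openin T U) \<and> \<Union>\<U> = topspace T}"

definition refines :: "'a set set \<Rightarrow> 'a set set \<Rightarrow> bool" where
  "refines \<B> \<A> \<longleftrightarrow> (\<forall>B\<in>\<B>. \<exists>A\<in>\<A>. B \<subseteq> A)"

definition Smirnov_Sc :: "'a topology \<Rightarrow> 'a set set set \<Rightarrow> 'a set set set \<Rightarrow> bool" where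
  "Smirnov_Sc T \<AA> \<BB> \<longleftrightarrow>
     (\<forall>A :: nat \<Rightarrow> 'a set set. (\<forall>n. A n \<in> \<AA>) \<longrightarrow>
        (\<exists>k::nat. 0 < k \<and> (\<exists>B :: nat \<Rightarrow> 'a set set.
           (\<forall>n\<le>k. pairwise disjnt (B n) \<and> (\<forall>V\<in>B n. openin T V) \<and> refines (B n) (A n)) \<and>
           (\<Union>n\<le>k. B n) \<in> \<BB>)))"

text \<open>The d-diameter of S is less than eps (sup of d over S x S is < eps; the empty set has
diameter 0).\<close>
definition diam_less :: "('a \<Rightarrow> 'a \<Rightarrow> real) \<Rightarrow> 'a set \<Rightarrow> real \<Rightarrow> bool" where
  "diam_less d S eps \<longleftrightarrow> (\<exists>r<eps. 0 \<le> r \<and> (\<forall>x\<in>S. \<forall>y\<in>S. d x y \<le> r))"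

definition finitary_Haver :: "'a topology \<Rightarrow> ('a \<Rightarrow> 'a \<Rightarrow> real) \<Rightarrow> bool" where
  "finitary_Haver T d \<longleftrightarrow>
     (\<forall>eps :: nat \<Rightarrow> real. (\<forall>n. 0 < eps n) \<longrightarrow>
        (\<exists>k::nat. 0 < k \<and> (\<exists>V :: nat \<Rightarrow> 'a set set.
           (\<forall>n\<le>k. pairwise disjnt (V n) \<and> (\<forall>W\<in>V n. openin T W \<and> diam_less d W (eps n))) \<and>
           \<Union>(\<Union>n\<le>k. V n) = topspace T)))"

definition compatible_metric :: "'a topology \<Rightarrow> ('a \<Rightarrow> 'a \<Rightarrow> real) \<Rightarrow> bool" where
  "compatible_metric T d \<longleftrightarrow> Metric_space (topspace T) d \<and> Metric_space.mtopology (topspace T) d = T"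

definition left_invariant :: "('a, 'b) monoid_scheme \<Rightarrow> ('a \<Rightarrow> 'a \<Rightarrow> real) \<Rightarrow> bool" where
  "left_invariant G d \<longleftrightarrow>
     (\<forall>g\<in>carrier G. \<forall>x\<in>carrier G. \<forall>y\<in>carrier G. d (g \<otimes>\<^bsub>G\<^esub> x) (g \<otimes>\<^bsub>G\<^esub> y) = d x y)"

end

theory Submission
  imports Defs
begin


lemma split_list_half:
  fixes f :: "'c \<Rightarrow> real"
  shows "l \<noteq> [] \<Longrightarrow> \<forall>x\<in>set l. 0 \<le> f x \<Longrightarrow> 0 \<le> c1 \<Longrightarrow> 0 \<le> c2 \<Longrightarrow>
    sum_list (map f l) \<le> c1 + c2 \<Longrightarrow>
    \<exists>xs a ys. l = xs @ a # ys \<and> sum_list (map f xs) \<le> c1 \<and> sum_list (map f ys) \<le> c2"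
proof (induction l arbitrary: c1)
  case Nil then show ?case by simp
next
  case (Cons x l)
  show ?case
  proof (cases "sum_list (map f l) \<le> c2")
    case True
    then show ?thesis using Cons.prems by (intro exI[of _ "[]"] exI[of _ x] exI[of _ l]) auto
  next
    case False
    have nn: "0 \<le> sum_list (map f l)" using Cons.prems(2) by (intro sum_list_nonneg) auto
    then have "l \<noteq> []" using False Cons.prems by auto
    have "f x \<le> c1" using False Cons.prems by auto
    then obtain xs a ys where "l = xs @ a # ys" "sum_list (map f xs) \<le> c1 - f x" "sum_list (map f ys) \<le> c2"
      using Cons.IH[of "c1 - f x"] \<open>l \<noteq> []\<close> Cons.prems False by auto
    then show ?thesis by (intro exI[of _ "x # xs"] exI[of _ a] exI[of _ ys]) auto
  qed
qed

locale BK = group G for G (structure) +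
  fixes T :: "'a topology" and \<rho> :: "'a \<Rightarrow> 'a \<Rightarrow> real"
  assumes tg: "topological_group G T"
    and rho: "Metric_space (carrier G) \<rho>"
    and Tm: "T = Metric_space.mtopology (carrier G) \<rho>"
begin

sublocale R: Metric_space "carrier G" \<rho> by (rule rho)

lemma topT: "topspace T = carrier G"
  using tg by (simp add: topological_group_def)

lemma mult_cont: "continuous_map (prod_topology T T) T (\<lambda>(x, y). x \<otimes> y)"
  using tg by (simp add: topological_group_def)

lemma inv_cont: "continuous_map T T (\<lambda>x. inv x)"
  using tg by (simp add: topological_group_def)

lemma lmult_cont:
  assumes "x \<in> carrier G" shows "continuous_map T T (\<lambda>u. x \<otimes> u)"
proof -
  have "continuous_map T (prod_topology T T) (\<lambda>u. (x, u))"
    by (intro continuous_map_pairedI) (simp_all add: topT assms)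
  from continuous_map_compose[OF this mult_cont] show ?thesis by (simp add: o_def)
qed

lemma open_lpre:
  assumes "x \<in> carrier G" "openin T W"
  shows "openin T {u \<in> carrier G. x \<otimes> u \<in> W}"
  using openin_continuous_map_preimage[OF lmult_cont[OF assms(1)] assms(2)] by (simp add: topT)

lemma nbhd2:
  assumes "openin T W" "\<one> \<in> W"
  shows "\<exists>V. openin T V \<and> \<one> \<in> V \<and> (\<forall>a\<in>V. \<forall>b\<in>V. a \<otimes> b \<in> W)"
proof -
  have "openin (prod_topology T T) {z \<in> topspace (prod_topology T T). (\<lambda>(x, y). x \<otimes> y) z \<in> W}"
    by (rule openin_continuous_map_preimage[OF mult_cont assms(1)])
  moreover have "(\<one>, \<one>) \<in> {z \<in> topspace (prod_topology T T). (\<lambda>(x, y). x \<otimes> y) z \<in> W}"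
    using assms by (simp add: topT)
  ultimately obtain U V where UV: "openin T U" "openin T V" "\<one> \<in> U" "\<one> \<in> V"
    "U \<times> V \<subseteq> {z \<in> topspace (prod_topology T T). (\<lambda>(x, y). x \<otimes> y) z \<in> W}"
    unfolding openin_prod_topology_alt by blast
  show ?thesis
    by (rule exI[of _ "U \<inter> V"]) (use UV in auto)
qed

lemma nbhd3:
  assumes "openin T W" "\<one> \<in> W"
  shows "\<exists>V. openin T V \<and> \<one> \<in> V \<and> V \<subseteq> W \<and> (\<forall>x\<in>V. inv x \<in> V) \<and>
            (\<forall>a\<in>V. \<forall>b\<in>V. \<forall>c\<in>V. a \<otimes> b \<otimes> c \<in> W)"
proof -
  obtain V1 where V1: "openin T V1" "\<one> \<in> V1" "\<forall>a\<in>V1. \<forall>b\<in>V1. a \<otimes> b \<in> W"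
    using nbhd2[OF assms] by blast
  obtain V2 where V2: "openin T V2" "\<one> \<in> V2" "\<forall>a\<in>V2. \<forall>b\<in>V2. a \<otimes> b \<in> V1"
    using nbhd2[OF V1(1,2)] by blast
  define V3 where "V3 = V2 \<inter> V1"
  have V3: "openin T V3" "\<one> \<in> V3" using V1 V2 by (auto simp: V3_def)
  have V3c: "V3 \<subseteq> carrier G" using openin_subset[OF V3(1)] topT by simp
  define V where "V = {x \<in> topspace T. inv x \<in> V3} \<inter> V3"
  have "openin T V" unfolding V_def
    by (intro openin_Int openin_continuous_map_preimage[OF inv_cont] V3)
  moreover have "\<one> \<in> V" using V3 by (simp add: V_def topT)
  moreover have sub: "V \<subseteq> V3" by (auto simp: V_def)
  moreover have tri: "\<forall>a\<in>V. \<forall>b\<in>V. \<forall>c\<in>V. a \<otimes> b \<otimes> c \<in> W"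
  proof (intro ballI)
    fix a b c assume "a \<in> V" "b \<in> V" "c \<in> V"
    then have "a \<in> V2" "b \<in> V2" "c \<in> V1" using sub by (auto simp: V3_def)
    then have "a \<otimes> b \<in> V1" using V2(3) by blast
    then show "a \<otimes> b \<otimes> c \<in> W" using V1(3) \<open>c \<in> V1\<close> by blast
  qed
  moreover have "V \<subseteq> W"
  proof
    fix a assume "a \<in> V"
    then have "a \<otimes> \<one> \<otimes> \<one> \<in> W" using tri \<open>\<one> \<in> V\<close> by blast
    then show "a \<in> W" using \<open>a \<in> V\<close> sub V3c by auto
  qed
  moreover have "\<forall>x\<in>V. inv x \<in> V" using V3c by (auto simp: V_def topT)
  ultimately show ?thesis by blast
qed

definition B :: "nat \<Rightarrow> 'a set" where "B n = R.mball \<one> (1 / real (Suc n))"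

lemma B_open: "openin T (B n)" by (simp add: B_def Tm)

lemma one_B: "\<one> \<in> B n" by (simp add: B_def)

definition nxt :: "nat \<Rightarrow> 'a set \<Rightarrow> 'a set" where
  "nxt n W = (SOME V. openin T V \<and> \<one> \<in> V \<and> V \<subseteq> W \<inter> B n \<and> (\<forall>x\<in>V. inv x \<in> V) \<and>
            (\<forall>a\<in>V. \<forall>b\<in>V. \<forall>c\<in>V. a \<otimes> b \<otimes> c \<in> W \<inter> B n))"

primrec Us :: "nat \<Rightarrow> 'a set" where
  "Us 0 = carrier G"
| "Us (Suc n) = nxt n (Us n)"

lemma nxt_props:
  assumes "openin T W" "\<one> \<in> W"
  shows "openin T (nxt n W) \<and> \<one> \<in> nxt n W \<and> nxt n W \<subseteq> W \<inter> B n \<and> (\<forall>x\<in>nxt n W. inv x \<in> nxt n W) \<and>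
            (\<forall>a\<in>nxt n W. \<forall>b\<in>nxt n W. \<forall>c\<in>nxt n W. a \<otimes> b \<otimes> c \<in> W \<inter> B n)"
proof -
  have h: "openin T (W \<inter> B n)" "\<one> \<in> W \<inter> B n" using assms B_open one_B by auto
  show ?thesis unfolding nxt_def by (rule someI_ex[OF nbhd3[OF h]])
qed

lemma Us_open: "openin T (Us n) \<and> \<one> \<in> Us n"
proof (induction n)
  case 0 then show ?case using openin_topspace[of T] by (simp add: topT)
next
  case (Suc n) then show ?case using nxt_props[of "Us n" n] by simp
qed

lemma Us_sub: "Us n \<subseteq> carrier G"
  using openin_subset[of T "Us n"] Us_open topT by simp

lemma one_Us: "\<one> \<in> Us n" using Us_open by simp

lemma Us_inv: assumes "x \<in> Us n" shows "inv x \<in> Us n"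
proof (cases n)
  case 0 then show ?thesis using assms by simp
next
  case (Suc m) then show ?thesis using assms nxt_props[of "Us m" m] Us_open by simp
qed

lemma Us_Suc: "Us (Suc n) \<subseteq> Us n \<inter> B n"
  using nxt_props[of "Us n" n] Us_open by simp

lemma Us_tri: "a \<in> Us (Suc n) \<Longrightarrow> b \<in> Us (Suc n) \<Longrightarrow> c \<in> Us (Suc n) \<Longrightarrow> a \<otimes> b \<otimes> c \<in> Us n"
  using nxt_props[of "Us n" n] Us_open by simp

lemma Us_mono: "m \<le> n \<Longrightarrow> Us n \<subseteq> Us m"
proof (induction n)
  case 0 then show ?case by simp
next
  case (Suc n) then show ?case using Us_Suc[of n] by (cases "m = Suc n") auto
qed

end

context BK begin

definition psi :: "'a \<Rightarrow> real" where
  "psi x = (if \<forall>n. x \<in> Us n then 0 else 2 * (1/2) ^ (LEAST n. x \<notin> Us n))"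

lemma psi_nonneg: "0 \<le> psi x" by (simp add: psi_def)

lemma psi_eq: "\<not> (\<forall>n. x \<in> Us n) \<Longrightarrow> psi x = 2 * (1/2) ^ (LEAST n. x \<notin> Us n)"
  unfolding psi_def by (rule if_not_P)

lemma inv_cancel: "g \<in> carrier G \<Longrightarrow> y \<in> carrier G \<Longrightarrow> inv g \<otimes> (g \<otimes> y) = y"
  by (simp add: m_assoc[symmetric])

lemma psi_le: assumes "x \<in> Us n" shows "psi x \<le> (1/2) ^ n"
proof (cases "\<forall>n. x \<in> Us n")
  case True then show ?thesis by (simp add: psi_def)
next
  case False
  define m where "m = (LEAST n. x \<notin> Us n)"
  have "x \<notin> Us m" unfolding m_def using False by (metis (mono_tags) LeastI)
  then have "n < m" using assms Us_mono[of m n] by (metis linorder_not_le subsetD)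
  then have "(1/2::real) ^ m \<le> (1/2) ^ (Suc n)" by (intro power_decreasing) auto
  moreover have "psi x = 2 * (1/2) ^ m" using psi_eq[OF False] by (simp add: m_def)
  ultimately show ?thesis by simp
qed

lemma psi_lt: assumes "x \<in> carrier G" "psi x < (1/2) ^ n" shows "x \<in> Us (Suc n)"
proof (rule ccontr)
  assume nx: "x \<notin> Us (Suc n)"
  then have F: "\<not> (\<forall>n. x \<in> Us n)" by blast
  define m where "m = (LEAST n. x \<notin> Us n)"
  have "m \<le> Suc n" unfolding m_def using nx by (rule Least_le)
  then have "(1/2::real) ^ (Suc n) \<le> (1/2) ^ m" by (intro power_decreasing) auto
  moreover have "psi x = 2 * (1/2) ^ m" using psi_eq[OF F] by (simp add: m_def)
  ultimately have "(1/2::real) ^ n \<le> psi x" by simp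
  then show False using assms(2) by simp
qed

lemma Us_inv_iff: "x \<in> carrier G \<Longrightarrow> inv x \<in> Us n \<longleftrightarrow> x \<in> Us n"
  using Us_inv[of "inv x" n] Us_inv[of x n] by auto

lemma psi_inv: "x \<in> carrier G \<Longrightarrow> psi (inv x) = psi x"
  by (simp add: psi_def Us_inv_iff)

lemma psi_one: "psi \<one> = 0" by (simp add: psi_def one_Us)

definition lprod :: "'a list \<Rightarrow> 'a" where "lprod us = foldr (\<otimes>) us \<one>"

lemma lprod_simps [simp]: "lprod [] = \<one>" "lprod (u # us) = u \<otimes> lprod us"
  by (simp_all add: lprod_def)

lemma lprod_closed [simp]: "set us \<subseteq> carrier G \<Longrightarrow> lprod us \<in> carrier G"
  by (induction us) auto

lemma lprod_append: "set us \<subseteq> carrier G \<Longrightarrow> set vs \<subseteq> carrier G \<Longrightarrow> lprod (us @ vs) = lprod us \<otimes> lprod vs"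
  by (induction us) (auto simp: m_assoc)

lemma lprod_rev_inv: "set us \<subseteq> carrier G \<Longrightarrow> lprod (rev (map (\<lambda>x. inv x) us)) = inv (lprod us)"
proof (induction us)
  case Nil then show ?case by simp
next
  case (Cons a us)
  have c: "a \<in> carrier G" "set us \<subseteq> carrier G" using Cons.prems by auto
  have "lprod (rev (map (\<lambda>x. inv x) (a # us))) = lprod (rev (map (\<lambda>x. inv x) us)) \<otimes> lprod [inv a]"
    using c lprod_append[of "rev (map (\<lambda>x. inv x) us)" "[inv a]"] by auto
  also have "\<dots> = inv (lprod us) \<otimes> inv a" using Cons c by simp
  also have "\<dots> = inv (lprod (a # us))" using c by (simp add: inv_mult_group)
  finally show ?case .
qed

abbreviation cost :: "'a list \<Rightarrow> real" where "cost us \<equiv> sum_list (map psi us)"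

lemma cost_nonneg: "0 \<le> cost us"
  by (intro sum_list_nonneg) (auto simp: psi_nonneg)

lemma key:
  "set us \<subseteq> carrier G \<Longrightarrow> psi (lprod us) \<le> 2 * cost us"
proof (induction "length us" arbitrary: us rule: less_induct)
  case less
  define S where "S = cost us"
  have S0: "0 \<le> S" unfolding S_def by (rule cost_nonneg)
  have R: "lprod us \<in> Us n" if "S < (1/2) ^ n" for n
  proof (cases "us = []")
    case True then show ?thesis by (simp add: one_Us)
  next
    case False
    have "\<exists>xs a ys. us = xs @ a # ys \<and> cost xs \<le> S/2 \<and> cost ys \<le> S/2"
      by (rule split_list_half) (use False S0 psi_nonneg in \<open>auto simp: S_def\<close>)
    then obtain xs a ys where sp: "us = xs @ a # ys" "cost xs \<le> S/2" "cost ys \<le> S/2"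
      by blast
    have c: "set xs \<subseteq> carrier G" "a \<in> carrier G" "set ys \<subseteq> carrier G" using less.prems sp by auto
    have Ssum: "S = cost xs + psi a + cost ys" unfolding S_def sp(1) by simp
    have "psi (lprod xs) \<le> 2 * cost xs" using less.hyps[of xs] c sp by simp
    then have 1: "lprod xs \<in> Us (Suc n)" using sp that c by (intro psi_lt) auto
    have "psi a \<le> S" using Ssum cost_nonneg[of xs] cost_nonneg[of ys] by linarith
    then have 2: "a \<in> Us (Suc n)" using that c by (intro psi_lt) auto
    have "psi (lprod ys) \<le> 2 * cost ys" using less.hyps[of ys] c sp by simp
    then have 3: "lprod ys \<in> Us (Suc n)" using sp that c by (intro psi_lt) auto
    have "lprod us = lprod xs \<otimes> a \<otimes> lprod ys"
      using c by (simp add: sp(1) lprod_append m_assoc)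
    then show ?thesis using Us_tri[OF 1 2 3] by simp
  qed
  have zc: "lprod us \<in> carrier G" using less.prems by simp
  show ?case
  proof (cases "\<forall>n. lprod us \<in> Us n")
    case True then show ?thesis using S0 by (simp add: psi_def S_def)
  next
    case F: False
    define m where "m = (LEAST n. lprod us \<notin> Us n)"
    have nm: "lprod us \<notin> Us m" unfolding m_def using F by (metis (mono_tags) LeastI)
    have "\<not> S < (1/2) ^ m" using R nm by blast
    moreover have "psi (lprod us) = 2 * (1/2) ^ m" using psi_eq[OF F] by (simp add: m_def)
    ultimately show ?thesis unfolding S_def by simp
  qed
qed

definition Sset :: "'a \<Rightarrow> real set" where
  "Sset z = {cost us | us. set us \<subseteq> carrier G \<and> lprod us = z}"

definition D :: "'a \<Rightarrow> real" where "D z = Inf (Sset z)"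

lemma bdd_Sset: "bdd_below (Sset z)"
  unfolding Sset_def by (rule bdd_belowI[of _ 0]) (auto simp: cost_nonneg)

lemma D_le: "set us \<subseteq> carrier G \<Longrightarrow> lprod us = z \<Longrightarrow> D z \<le> cost us"
  unfolding D_def by (rule cInf_lower[OF _ bdd_Sset]) (auto simp: Sset_def)

lemma D_ge: assumes "z \<in> carrier G" "\<And>us. set us \<subseteq> carrier G \<Longrightarrow> lprod us = z \<Longrightarrow> c \<le> cost us"
  shows "c \<le> D z"
proof -
  have "cost [z] \<in> Sset z" using assms(1) unfolding Sset_def by (intro CollectI exI[of _ "[z]"]) simp
  then have "Sset z \<noteq> {}" by blast
  then show ?thesis unfolding D_def by (rule cInf_greatest) (auto simp: Sset_def assms(2))
qed

lemma D_nonneg: "z \<in> carrier G \<Longrightarrow> 0 \<le> D z"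
  by (rule D_ge) (auto simp: cost_nonneg)

lemma D_le_psi: "z \<in> carrier G \<Longrightarrow> D z \<le> psi z"
  using D_le[of "[z]" z] by simp

lemma psi_le_D: "z \<in> carrier G \<Longrightarrow> psi z \<le> 2 * D z"
proof -
  assume z: "z \<in> carrier G"
  have "psi z / 2 \<le> D z"
  proof (rule D_ge[OF z])
    fix us assume "set us \<subseteq> carrier G" "lprod us = z"
    then show "psi z / 2 \<le> cost us" using key[of us] by simp
  qed
  then show ?thesis by simp
qed

lemma D_one: "D \<one> = 0"
  using D_le[of "[]" \<one>] D_nonneg[of \<one>] by simp

lemma D_inv_le: assumes "z \<in> carrier G" shows "D (inv z) \<le> D z"
proof (rule D_ge[OF assms])
  fix us assume us: "set us \<subseteq> carrier G" "lprod us = z"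
  have e: "map (\<lambda>x. psi (inv x)) us = map psi us" by (rule map_cong) (use us(1) in \<open>auto simp: psi_inv\<close>)
  have "cost (rev (map (\<lambda>x. inv x) us)) = cost us" by (simp add: rev_map[symmetric] o_def e)
  moreover have "D (inv z) \<le> cost (rev (map (\<lambda>x. inv x) us))"
    using us by (intro D_le) (auto simp: lprod_rev_inv)
  ultimately show "D (inv z) \<le> cost us" by simp
qed

lemma D_inv: assumes "z \<in> carrier G" shows "D (inv z) = D z"
  using D_inv_le[OF assms] D_inv_le[of "inv z"] assms by simp

lemma D_mult: assumes "a \<in> carrier G" "b \<in> carrier G" shows "D (a \<otimes> b) \<le> D a + D b"
proof -
  have "D (a \<otimes> b) - D a \<le> D b"
  proof (rule D_ge[OF assms(2)])
    fix vs assume vs: "set vs \<subseteq> carrier G" "lprod vs = b"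
    have "D (a \<otimes> b) - cost vs \<le> D a"
    proof (rule D_ge[OF assms(1)])
      fix us assume us: "set us \<subseteq> carrier G" "lprod us = a"
      have "D (a \<otimes> b) \<le> cost (us @ vs)" using us vs by (intro D_le) (auto simp: lprod_append)
      then show "D (a \<otimes> b) - cost vs \<le> cost us" by simp
    qed
    then show "D (a \<otimes> b) - D a \<le> cost vs" by simp
  qed
  then show ?thesis by simp
qed

lemma D_zero: assumes "z \<in> carrier G" "D z = 0" shows "z = \<one>"
proof -
  have "psi z \<le> 0" using psi_le_D[OF assms(1)] assms(2) by simp
  have inU: "z \<in> Us (Suc n)" for n
  proof -
    have "psi z < (1/2)^n" using \<open>psi z \<le> 0\<close> zero_less_power[of "1/2::real" n] by linarith
    then show ?thesis using assms(1) psi_lt by blast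
  qed
  have lt: "\<rho> \<one> z < 1 / real (Suc n)" for n using inU[of n] Us_Suc[of n] by (auto simp: B_def)
  have "\<not> 0 < \<rho> \<one> z"
  proof
    assume p: "0 < \<rho> \<one> z"
    obtain n where "inverse (real (Suc n)) < \<rho> \<one> z" using reals_Archimedean[OF p] by auto
    then show False using lt[of n] by (simp add: inverse_eq_divide)
  qed
  then have "\<rho> \<one> z \<le> 0" by simp
  then have "\<rho> \<one> z = 0" using R.nonneg[of \<one> z] by linarith
  then show ?thesis using assms(1) by simp
qed

definition dd :: "'a \<Rightarrow> 'a \<Rightarrow> real" where
  "dd x y = (if x \<in> carrier G \<and> y \<in> carrier G then D (inv x \<otimes> y) else 0)"

lemma dd_metric: "Metric_space (carrier G) dd"
proof
  fix x y show "0 \<le> dd x y" by (simp add: dd_def D_nonneg)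
  show "dd x y = dd y x"
  proof (cases "x \<in> carrier G \<and> y \<in> carrier G")
    case True
    then have "inv y \<otimes> x = inv (inv x \<otimes> y)" by (simp add: inv_mult_group)
    then show ?thesis using True by (simp add: dd_def D_inv)
  qed (auto simp: dd_def)
next
  fix x y assume xy: "x \<in> carrier G" "y \<in> carrier G"
  show "dd x y = 0 \<longleftrightarrow> x = y"
  proof
    assume "dd x y = 0"
    then have "inv x \<otimes> y = \<one>" using xy D_zero by (simp add: dd_def)
    then have "x \<otimes> (inv x \<otimes> y) = x" using xy by simp
    then show "x = y" using xy by (simp add: m_assoc[symmetric])
  qed (simp add: dd_def xy D_one)
next
  fix x y z assume xyz: "x \<in> carrier G" "y \<in> carrier G" "z \<in> carrier G"
  have "inv x \<otimes> z = (inv x \<otimes> y) \<otimes> (inv y \<otimes> z)" using xyz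
    by (simp add: m_assoc[symmetric]) (simp add: m_assoc)
  then show "dd x z \<le> dd x y + dd y z" using xyz D_mult by (simp add: dd_def)
qed

lemma dd_left_inv: "left_invariant G dd"
  unfolding left_invariant_def
proof (intro ballI)
  fix g x y assume c: "g \<in> carrier G" "x \<in> carrier G" "y \<in> carrier G"
  have "inv (g \<otimes> x) \<otimes> (g \<otimes> y) = inv x \<otimes> (inv g \<otimes> (g \<otimes> y))"
    using c by (simp add: inv_mult_group m_assoc)
  also have "\<dots> = inv x \<otimes> y" using c by (simp add: inv_cancel)
  finally show "dd (g \<otimes> x) (g \<otimes> y) = dd x y" using c by (simp add: dd_def)
qed

end

context BK begin

lemma dd_topology: "Metric_space.mtopology (carrier G) dd = T"
proof -
  interpret DM: Metric_space "carrier G" dd by (rule dd_metric)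
  show ?thesis unfolding topology_eq
  proof (intro allI iffI)
    fix S assume "openin DM.mtopology S"
    then have S: "S \<subseteq> carrier G" "\<And>x. x \<in> S \<Longrightarrow> \<exists>r>0. DM.mball x r \<subseteq> S"
      by (auto simp: DM.openin_mtopology)
    show "openin T S"
    proof (subst openin_subopen, intro ballI)
      fix x assume xS: "x \<in> S"
      then have xc: "x \<in> carrier G" using S by auto
      obtain r where r: "r > 0" "DM.mball x r \<subseteq> S" using S(2)[OF xS] by blast
      obtain n where n: "(1/2::real) ^ n < r" using real_arch_pow_inv[of r "1/2"] r by auto
      define V where "V = {y \<in> carrier G. inv x \<otimes> y \<in> Us n}"
      have "openin T V" unfolding V_def
        using open_lpre[of "inv x" "Us n"] xc Us_open by simp
      moreover have "x \<in> V" using xc by (simp add: V_def one_Us)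
      moreover have "V \<subseteq> S"
      proof
        fix y assume "y \<in> V"
        then have y: "y \<in> carrier G" "inv x \<otimes> y \<in> Us n" by (auto simp: V_def)
        have "dd x y \<le> psi (inv x \<otimes> y)" using xc y by (simp add: dd_def D_le_psi)
        also have "\<dots> \<le> (1/2)^n" by (rule psi_le[OF y(2)])
        finally have "y \<in> DM.mball x r" using xc y n by simp
        then show "y \<in> S" using r by blast
      qed
      ultimately show "\<exists>V. openin T V \<and> x \<in> V \<and> V \<subseteq> S" by blast
    qed
  next
    fix S assume oS: "openin T S"
    have Sc: "S \<subseteq> carrier G" using openin_subset[OF oS] topT by simp
    show "openin DM.mtopology S" unfolding DM.openin_mtopology
    proof (intro conjI Sc allI impI)
      fix x assume xS: "x \<in> S"
      then have xc: "x \<in> carrier G" using Sc by auto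
      define W where "W = {u \<in> carrier G. x \<otimes> u \<in> S}"
      have "openin T W" unfolding W_def by (rule open_lpre[OF xc oS])
      then have "openin R.mtopology W" using Tm by simp
      moreover have "\<one> \<in> W" using xc xS by (simp add: W_def)
      ultimately obtain e where e: "e > 0" "R.mball \<one> e \<subseteq> W"
        unfolding R.openin_mtopology by blast
      obtain m where m: "1 / real (Suc m) < e"
        using reals_Archimedean[OF e(1)] by (auto simp: inverse_eq_divide)
      have UW: "Us (Suc m) \<subseteq> W"
      proof
        fix u assume "u \<in> Us (Suc m)"
        then have "u \<in> B m" using Us_Suc by blast
        then have "u \<in> R.mball \<one> e" using m by (auto simp: B_def)
        then show "u \<in> W" using e by blast
      qed
      have "DM.mball x ((1/2)^(Suc m)) \<subseteq> S"
      proof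
        fix y assume "y \<in> DM.mball x ((1/2)^(Suc m))"
        then have y: "y \<in> carrier G" "dd x y < (1/2)^(Suc m)" by auto
        have "psi (inv x \<otimes> y) \<le> 2 * dd x y" using xc y by (simp add: dd_def psi_le_D)
        also have "\<dots> < (1/2)^m" using y(2) by simp
        finally have "inv x \<otimes> y \<in> Us (Suc m)" using xc y by (intro psi_lt) auto
        then have "inv x \<otimes> y \<in> W" using UW by blast
        then have "x \<otimes> (inv x \<otimes> y) \<in> S" by (simp add: W_def)
        then show "y \<in> S" using xc y by (simp add: m_assoc[symmetric])
      qed
      then show "\<exists>r>0. DM.mball x r \<subseteq> S" by (intro exI[of _ "(1/2)^(Suc m)"]) simp
    qed
  qed
qed

lemma exists_metric: "\<exists>d. compatible_metric T d \<and> left_invariant G d"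
  using dd_metric dd_topology dd_left_inv topT unfolding compatible_metric_def by metis

end


lemma (in group) dirA:
  fixes T :: "'a topology"
  assumes top: "topspace T = carrier G"
    and cm: "compatible_metric T d" and li: "left_invariant G d"
    and Sm: "Smirnov_Sc T (O_nbd G T) (open_covers T)"
  shows "finitary_Haver T d"
proof -
  interpret DM: Metric_space "carrier G" d using cm top by (simp add: compatible_metric_def)
  have Td: "DM.mtopology = T" using cm top by (simp add: compatible_metric_def)
  show ?thesis unfolding finitary_Haver_def
  proof (intro allI impI)
    fix eps :: "nat \<Rightarrow> real" assume pos: "\<forall>n. 0 < eps n"
    define A where "A n = O_of G (DM.mball \<one> (eps n / 3))" for n
    have An: "A n \<in> O_nbd G T" for n
    proof -
      have "nbhd_of T \<one> (DM.mball \<one> (eps n / 3))"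
        unfolding nbhd_of_def using pos top Td DM.mball_subset_mspace[of \<one> "eps n / 3"]
        by (intro conjI exI[of _ "DM.mball \<one> (eps n / 3)"]) auto
      then show ?thesis unfolding O_nbd_def A_def by blast
    qed
    then obtain k B where k: "0 < k"
      and Bp: "\<forall>n\<le>k. pairwise disjnt (B n) \<and> (\<forall>V\<in>B n. openin T V) \<and> refines (B n) (A n)"
      and cov: "(\<Union>n\<le>k. B n) \<in> open_covers T"
      using Sm[unfolded Smirnov_Sc_def, rule_format, of A, OF An] by (elim exE conjE) (rule that; assumption)
    have diam: "diam_less d W (eps n)" if nk: "n \<le> k" and WB: "W \<in> B n" for n W
    proof -
      have "refines (B n) (A n)" using Bp nk by blast
      then obtain A0 where "A0 \<in> A n" "W \<subseteq> A0" using WB unfolding refines_def by blast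
      then obtain x where x: "x \<in> carrier G" "W \<subseteq> x <# DM.mball \<one> (eps n / 3)"
        unfolding A_def O_of_def by auto
      show ?thesis unfolding diam_less_def
      proof (intro exI[of _ "2 * eps n / 3"] conjI ballI)
        show "2 * eps n / 3 < eps n" "0 \<le> 2 * eps n / 3" using pos[rule_format, of n] by auto
        fix y z assume "y \<in> W" "z \<in> W"
        then have "y \<in> x <# DM.mball \<one> (eps n / 3)" "z \<in> x <# DM.mball \<one> (eps n / 3)"
          using x(2) by auto
        then obtain u v where uv: "u \<in> DM.mball \<one> (eps n / 3)" "v \<in> DM.mball \<one> (eps n / 3)"
          "y = x \<otimes> u" "z = x \<otimes> v"
          unfolding l_coset_def by auto
        have "d y z = d u v" unfolding uv(3,4)
          by (rule li[unfolded left_invariant_def, rule_format]) (use x uv in auto)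
        also have "\<dots> \<le> d u \<one> + d \<one> v" using uv by (intro DM.triangle) auto
        also have "\<dots> \<le> 2 * eps n / 3" using uv DM.commute[of u \<one>] by auto
        finally show "d y z \<le> 2 * eps n / 3" .
      qed
    qed
    show "\<exists>k>0. \<exists>V. (\<forall>n\<le>k. pairwise disjnt (V n) \<and> (\<forall>W\<in>V n. openin T W \<and> diam_less d W (eps n))) \<and>
           \<Union>(\<Union>n\<le>k. V n) = topspace T"
    proof (intro exI[of _ k] conjI k exI[of _ B] allI impI ballI)
      fix n assume "n \<le> k"
      then show "pairwise disjnt (B n)" using Bp by blast
      fix W assume "W \<in> B n"
      then show "openin T W" using Bp \<open>n \<le> k\<close> by blast
      show "diam_less d W (eps n)" by (rule diam) fact+
    next
      show "\<Union>(\<Union>n\<le>k. B n) = topspace T" using cov unfolding open_covers_def by blast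
    qed
  qed
qed

lemma (in group) dirB:
  fixes T :: "'a topology"
  assumes top: "topspace T = carrier G"
    and cm: "compatible_metric T d" and li: "left_invariant G d"
    and H: "finitary_Haver T d"
  shows "Smirnov_Sc T (O_nbd G T) (open_covers T)"
proof -
  interpret DM: Metric_space "carrier G" d using cm top by (simp add: compatible_metric_def)
  have Td: "DM.mtopology = T" using cm top by (simp add: compatible_metric_def)
  show ?thesis unfolding Smirnov_Sc_def
  proof (intro allI impI)
    fix A :: "nat \<Rightarrow> 'a set set" assume An: "\<forall>n. A n \<in> O_nbd G T"
    have "\<forall>n. \<exists>U. nbhd_of T \<one> U \<and> A n = O_of G U" using An unfolding O_nbd_def by blast
    then obtain U where U: "\<And>n. nbhd_of T \<one> (U n)" "\<And>n. A n = O_of G (U n)" by metis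
    have "\<exists>e>0. DM.mball \<one> e \<subseteq> U n" for n
    proof -
      obtain V where V: "openin T V" "\<one> \<in> V" "V \<subseteq> U n" using U(1)[of n] unfolding nbhd_of_def by blast
      then obtain e where "e > 0" "DM.mball \<one> e \<subseteq> V" using Td DM.openin_mtopology by metis
      then show ?thesis using V by blast
    qed
    then obtain eps where eps: "\<And>n. eps n > 0" "\<And>n. DM.mball \<one> (eps n) \<subseteq> U n" by metis
    obtain k V where k: "0 < k"
      and Vp: "\<forall>n\<le>k. pairwise disjnt (V n) \<and> (\<forall>W\<in>V n. openin T W \<and> diam_less d W (eps n))"
      and cov: "\<Union>(\<Union>n\<le>k. V n) = topspace T"
      using H[unfolded finitary_Haver_def, rule_format, of eps, OF eps(1)] by (elim exE conjE) (rule that; assumption)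
    have ref: "refines (V n) (A n)" if "n \<le> k" for n
      unfolding refines_def
    proof
      fix W assume W: "W \<in> V n"
      show "\<exists>A0\<in>A n. W \<subseteq> A0"
      proof (cases "W = {}")
        case True
        then show ?thesis unfolding U(2) O_of_def by blast
      next
        case False
        then obtain w where w: "w \<in> W" by blast
        have Wo: "openin T W" "diam_less d W (eps n)" using Vp W that by auto
        have Wc: "W \<subseteq> carrier G" using openin_subset[OF Wo(1)] top by simp
        obtain r where r: "r < eps n" "\<forall>x\<in>W. \<forall>y\<in>W. d x y \<le> r"
          using Wo(2) unfolding diam_less_def by blast
        have "W \<subseteq> w <# U n"
        proof
          fix y assume y: "y \<in> W"
          define u where "u = inv w \<otimes> y"
          have wc: "w \<in> carrier G" "y \<in> carrier G" using w y Wc by auto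
          have "d \<one> u = d (inv w \<otimes> w) (inv w \<otimes> y)" using wc by (simp add: u_def)
          also have "\<dots> = d w y" by (rule li[unfolded left_invariant_def, rule_format]) (use wc in auto)
          finally have "d \<one> u < eps n" using r w y by force
          then have "u \<in> U n" using eps(2)[of n] wc by (auto simp: u_def)
          moreover have "y = w \<otimes> u" using wc by (simp add: u_def m_assoc[symmetric])
          ultimately show "y \<in> w <# U n" unfolding l_coset_def by blast
        qed
        moreover have "w <# U n \<in> A n" using w Wc unfolding U(2) O_of_def by blast
        ultimately show ?thesis by blast
      qed
    qed
    show "\<exists>k>0. \<exists>B. (\<forall>n\<le>k. pairwise disjnt (B n) \<and> (\<forall>V\<in>B n. openin T V) \<and> refines (B n) (A n)) \<and>
           (\<Union>n\<le>k. B n) \<in> open_covers T"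
    proof (intro exI[of _ k] conjI k exI[of _ V] allI impI ballI)
      fix n assume "n \<le> k"
      then show "pairwise disjnt (V n)" using Vp by blast
      show "refines (V n) (A n)" by (rule ref) fact
      fix W assume "W \<in> V n"
      then show "openin T W" using Vp \<open>n \<le> k\<close> by blast
    next
      show "(\<Union>n\<le>k. V n) \<in> open_covers T" unfolding open_covers_def using cov Vp by blast
    qed
  qed
qed

theorem theorem2p4:
  fixes G :: "('a, 'b) monoid_scheme" and T :: "'a topology"
  assumes "topological_group G T" and "metrizable_space T"
  shows "Smirnov_Sc T (O_nbd G T) (open_covers T) \<longleftrightarrow>
         (\<forall>d. compatible_metric T d \<and> left_invariant G d \<longrightarrow> finitary_Haver T d)"
proof -
  have grp: "group G" and top: "topspace T = carrier G"
    using assms(1) by (auto simp: topological_group_def)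
  obtain M \<rho> where M: "Metric_space M \<rho>" "T = Metric_space.mtopology M \<rho>"
    using assms(2) unfolding metrizable_space_def by blast
  have "M = carrier G" using Metric_space.topspace_mtopology[OF M(1)] M(2) top by simp
  then have "BK G T \<rho>" using grp assms(1) M unfolding BK_def BK_axioms_def by simp
  then obtain d0 where d0: "compatible_metric T d0" "left_invariant G d0"
    using BK.exists_metric by blast
  show ?thesis
    using group.dirA[OF grp top] group.dirB[OF grp top d0] d0 by blast
qed


end
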